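(* Assume every policy $\mu^i$ is $L_\mu$-Lipschitz, $l$ is $\bar L_\mathrm{l}$-smooth, and $V$ is $\bar L_\mathrm{V}$-smooth with $V(x)\ge-\underline{c}_\mathrm{V}+\underline{L}_\mathrm{V}|x|^2/2$ for some $\underline{L}_\mathrm{V}>0$, $\underline{c}_\mathrm{V}\ge0$. Then there exist constants $c_2,c_\mathrm{o}\ge0$ such that $$\mathrm{E}[V(f(x,\mu^i(x)+n_\mathrm{u})+n)]\le c_2V(x)-\mathrm{E}[l(x,\mu^i(x)+n_\mathrm{u})]+c_\mathrm{o}+(\bar L_\mathrm{V}L^2+\bar L_\mathrm{l})d_\mathrm{u}\sigma_\mathrm{u}^2+\frac{\bar L_\mathrm{V}}2d_\mathrm{x}\sigma^2$$ for all $x\in\mathbb{R}^{d_\mathrm{x}}$, all $\sigma_\mathrm{u}>0$ and all $i\in\{1,\dots,m\}$, where $n\sim\mathcal N(0,\sigma^2I)$ and $n_\mathrm{u}\sim\mathcal N(0,\sigma_\mathrm{u}^2I)$ are independent, $c_2=(8L^2\bar L_\mathrm{V}(1+L_\mu)^2+2\bar L_\mathrm{l}(1+2L_\mu^2))/\underline{L}_\mathrm{V}$, and $c_\mathrm{o}$ can be expressed as an explicit function of $\max_i|\mu^i(0)|$, $V(0)$, $|\nabla V(0)|$, $l(0,0)$, $|\nabla l(0,0)|$, $|f(0,\mu(0))|$ and $\underline{c}_\mathrm{V}$.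
   Context: $f:\mathbb{R}^{d_\mathrm{x}}\times\mathbb{R}^{d_\mathrm{u}}\to\mathbb{R}^{d_\mathrm{x}}$ is the true dynamics, $L$-Lipschitz in $(x,u)$, equal to one of finitely many candidates $f^1,\dots,f^m$ (say $f=f^{i^*}$), each with an associated policy $\mu^i:\mathbb{R}^{d_\mathrm{x}}\to\mathbb{R}^{d_\mathrm{u}}$; $\mu:=\mu^{i^*}$. $\sigma>0$. The stage cost is $l:\mathbb{R}^{d_\mathrm{x}}\times\mathbb{R}^{d_\mathrm{u}}\to\mathbb{R}_{\ge0}$. $V:\mathbb{R}^{d_\mathrm{x}}\to\mathbb{R}_{\ge0}$ is a cost-to-go function for $f$ and $\mu$: for a constant $L_\mathrm{u}$ and a constant $\gamma$, $V(x)\ge\mathrm{E}[l(x,u)+V(f(x,u)+n)]-\gamma-d_\mathrm{u}L_\mathrm{u}\sigma_\mathrm{u}^2$ for all $x$, with $u=\mu(x)+n_\mathrm{u}$, $n\sim\mathcal N(0,\sigma^2I)$, $n_\mathrm{u}\sim\mathcal N(0,\sigma_\mathrm{u}^2I)$. A function is $\beta$-smooth if it is differentiable with $\beta$-Lipschitz gradient; $|\cdot|$ is the Euclidean norm. *)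

theory Defs
  imports "HOL-Analysis.Analysis" "HOL-Probability.Probability"
begin

definition grad :: "('a::euclidean_space \<Rightarrow> real) \<Rightarrow> 'a \<Rightarrow> 'a" where
  "grad F x = (SOME g. (F has_derivative (\<lambda>h. g \<bullet> h)) (at x))"

definition smooth_with :: "real \<Rightarrow> ('a::euclidean_space \<Rightarrow> real) \<Rightarrow> bool" where
  "smooth_with \<beta> F \<longleftrightarrow>
     (\<forall>x. \<exists>g. (F has_derivative (\<lambda>h. g \<bullet> h)) (at x)) \<and>
     (\<forall>x y. norm (grad F x - grad F y) \<le> \<beta> * norm (x - y))"

definition gauss :: "real \<Rightarrow> 'a::euclidean_space measure" where
  "gauss s = density lborel
     (\<lambda>x::'a. ennreal ((2 * pi * s\<^sup>2) powr (- real DIM('a) / 2) * exp (- (norm x)\<^sup>2 / (2 * s\<^sup>2))))"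

definition cost_to_go ::
  "('x::euclidean_space \<times> 'u::euclidean_space \<Rightarrow> 'x) \<Rightarrow> ('x \<Rightarrow> 'u) \<Rightarrow> ('x \<times> 'u \<Rightarrow> real)
   \<Rightarrow> ('x \<Rightarrow> real) \<Rightarrow> real \<Rightarrow> real \<Rightarrow> real \<Rightarrow> real \<Rightarrow> bool" where
  "cost_to_go f mu l V s su Lu \<gamma> \<longleftrightarrow>
     (\<forall>x. V x \<ge> integral\<^sup>L (gauss su \<Otimes>\<^sub>M gauss s)
                   (\<lambda>(nu, n). l (x, mu x + nu) + V (f (x, mu x + nu) + n))
                 - \<gamma> - real DIM('u) * Lu * su\<^sup>2)"

end

theory Submission
  imports Defs
begin

lemma gauss_dens_prod:
  fixes x :: "'a::euclidean_space"
  assumes s: "s > 0"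
  shows "(2 * pi * s\<^sup>2) powr (- real DIM('a) / 2) * exp (- (norm x)\<^sup>2 / (2 * s\<^sup>2))
         = (\<Prod>b\<in>Basis. normal_density 0 s (x \<bullet> b))"
proof -
  have a: "2 * pi * s\<^sup>2 > 0" using s by simp
  have n: "(norm x)\<^sup>2 = (\<Sum>b\<in>Basis. (x \<bullet> b)\<^sup>2)"
  proof -
    have "(norm x)\<^sup>2 = x \<bullet> x" by (simp add: power2_norm_eq_inner)
    also have "\<dots> = (\<Sum>b\<in>Basis. (x \<bullet> b) * (x \<bullet> b))" by (rule euclidean_inner)
    finally show ?thesis by (simp add: power2_eq_square)
  qed
  have e: "exp (- (norm x)\<^sup>2 / (2 * s\<^sup>2)) = (\<Prod>b\<in>Basis. exp (- (x \<bullet> b)\<^sup>2 / (2 * s\<^sup>2)))"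
    unfolding n by (simp add: exp_sum[symmetric] sum_negf sum_divide_distrib)
  have c: "(2 * pi * s\<^sup>2) powr (- real DIM('a) / 2) = (\<Prod>b\<in>(Basis::'a set). 1 / sqrt (2 * pi * s\<^sup>2))"
  proof -
    have e1: "1 / sqrt (2 * pi * s\<^sup>2) = (2 * pi * s\<^sup>2) powr (-(1/2))"
      by (simp only: powr_minus powr_half_sqrt[OF less_imp_le[OF a]] inverse_eq_divide)
    have e2: "((2 * pi * s\<^sup>2) powr (-(1/2))) ^ DIM('a) = (2 * pi * s\<^sup>2) powr (- real DIM('a) / 2)"
    proof -
      have "((2 * pi * s\<^sup>2) powr (-(1/2))) ^ DIM('a) = ((2 * pi * s\<^sup>2) powr (-(1/2))) powr (real DIM('a))"
        using a by (subst powr_realpow) auto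
      also have "\<dots> = (2 * pi * s\<^sup>2) powr (-(1/2) * real DIM('a))" by (rule powr_powr)
      finally show ?thesis by simp
    qed
    have "(\<Prod>b\<in>(Basis::'a set). 1 / sqrt (2 * pi * s\<^sup>2)) = (1 / sqrt (2 * pi * s\<^sup>2)) ^ DIM('a)"
      by simp
    also have "\<dots> = ((2 * pi * s\<^sup>2) powr (-(1/2))) ^ DIM('a)" by (simp only: e1)
    also have "\<dots> = (2 * pi * s\<^sup>2) powr (- real DIM('a) / 2)" by (rule e2)
    finally show ?thesis by (rule sym)
  qed
  show ?thesis unfolding e c normal_density_def by (simp only: prod.distrib mult_zero_left diff_zero)
qed

lemma nd_nn1: assumes s: "s > 0" shows "(\<integral>\<^sup>+t. ennreal (normal_density 0 s t) \<partial>lborel) = 1"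
  by (subst nn_integral_eq_integral) (auto simp: s)

lemma nd_nn2: assumes s: "s > 0"
  shows "(\<integral>\<^sup>+t. ennreal (normal_density 0 s t * t\<^sup>2) \<partial>lborel) = ennreal (s\<^sup>2)"
proof -
  have i: "integrable lborel (\<lambda>t. normal_density 0 s t * t\<^sup>2)"
    using integrable_normal_moment[OF s, of 0 2] by simp
  have v: "integral\<^sup>L lborel (\<lambda>t. normal_density 0 s t * t\<^sup>2) = s\<^sup>2"
    using integral_normal_moment_even[OF s, of 0 1] s by (simp add: power2_eq_square)
  show ?thesis
    by (subst nn_integral_eq_integral[OF i]) (auto simp: v)
qed

lemma gauss_nn:
  assumes s: "s > 0" and g[measurable]: "g \<in> borel_measurable borel"
  shows "(\<integral>\<^sup>+x. g x \<partial>(gauss s :: 'a::euclidean_space measure))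
      = (\<integral>\<^sup>+x. ennreal (\<Prod>b\<in>Basis. normal_density 0 s (x \<bullet> b)) * g x \<partial>lborel)"
  unfolding gauss_def
  apply (subst nn_integral_density)
  apply measurable
  apply (rule nn_integral_cong)
  apply (simp only: gauss_dens_prod[OF s])
  done

lemma gauss_space[simp]: "space (gauss s) = UNIV" and gauss_sets[simp, measurable_cong]: "sets (gauss s) = sets borel"
  by (simp_all add: gauss_def)

lemma gauss_prob: assumes s: "s > 0" shows "prob_space (gauss s :: 'a::euclidean_space measure)"
proof
  have "emeasure (gauss s :: 'a measure) (space (gauss s)) = (\<integral>\<^sup>+x. 1 \<partial>(gauss s :: 'a measure))"
    by simp
  also have "\<dots> = (\<integral>\<^sup>+x. ennreal (\<Prod>b\<in>Basis. normal_density 0 s (x \<bullet> b)) \<partial>(lborel::'a measure))"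
    by (subst gauss_nn[OF s]) auto
  also have "\<dots> = (\<Prod>b\<in>(Basis::'a set). (\<integral>\<^sup>+t. ennreal (normal_density 0 s t) \<partial>lborel))"
    using nn_integral_lborel_prod[where 'a='a, of "\<lambda>b t. normal_density 0 s t"]
    by (simp add: prod_ennreal)
  also have "\<dots> = 1" by (simp add: nd_nn1[OF s])
  finally show "emeasure (gauss s :: 'a measure) (space (gauss s)) = 1" .
qed

lemma gauss_mom2: assumes s: "s > 0"
  shows "(\<integral>\<^sup>+x. ennreal ((norm x)\<^sup>2) \<partial>(gauss s :: 'a::euclidean_space measure)) = ennreal (real DIM('a) * s\<^sup>2)"
proof -
  have n: "\<And>x::'a. (norm x)\<^sup>2 = (\<Sum>b\<in>Basis. (x \<bullet> b)\<^sup>2)"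
  proof -
    fix x :: 'a
    have "(norm x)\<^sup>2 = x \<bullet> x" by (simp add: power2_norm_eq_inner)
    also have "\<dots> = (\<Sum>b\<in>Basis. (x \<bullet> b) * (x \<bullet> b))" by (rule euclidean_inner)
    finally show "(norm x)\<^sup>2 = (\<Sum>b\<in>Basis. (x \<bullet> b)\<^sup>2)" by (simp add: power2_eq_square)
  qed
  define f where "f b b' t = normal_density 0 s t * (if b' = b then t\<^sup>2 else 1)" for b b' :: 'a and t
  have pf: "\<And>x b. b \<in> Basis \<Longrightarrow> (\<Prod>b'\<in>Basis. f b b' (x \<bullet> b')) = (\<Prod>b'\<in>Basis. normal_density 0 s (x \<bullet> b')) * (x \<bullet> b)\<^sup>2"
    by (simp add: f_def prod.distrib prod.delta')
  have "(\<integral>\<^sup>+x. ennreal ((norm x)\<^sup>2) \<partial>(gauss s :: 'a measure))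
      = (\<integral>\<^sup>+x. ennreal (\<Prod>b\<in>Basis. normal_density 0 s (x \<bullet> b)) * ennreal ((norm x)\<^sup>2) \<partial>(lborel::'a measure))"
    by (subst gauss_nn[OF s]) auto
  also have "\<dots> = (\<integral>\<^sup>+x. (\<Sum>b\<in>Basis. ennreal (\<Prod>b'\<in>Basis. f b b' (x \<bullet> b'))) \<partial>lborel)"
  proof (rule nn_integral_cong)
    fix x :: 'a
    have "(\<Prod>b\<in>Basis. normal_density 0 s (x \<bullet> b)) * (norm x)\<^sup>2 = (\<Sum>b\<in>Basis. (\<Prod>b'\<in>Basis. f b b' (x \<bullet> b')))"
      unfolding n sum_distrib_left by (rule sum.cong) (simp_all add: pf)
    moreover have "\<And>b. 0 \<le> (\<Prod>b'\<in>Basis. f b b' (x \<bullet> b'))"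
      by (rule prod_nonneg) (simp add: f_def)
    ultimately show "ennreal (\<Prod>b\<in>Basis. normal_density 0 s (x \<bullet> b)) * ennreal ((norm x)\<^sup>2) = (\<Sum>b\<in>Basis. ennreal (\<Prod>b'\<in>Basis. f b b' (x \<bullet> b')))"
      by (simp add: ennreal_mult''[symmetric] prod_nonneg sum_ennreal)
  qed
  also have "\<dots> = (\<Sum>b\<in>Basis. (\<integral>\<^sup>+x. ennreal (\<Prod>b'\<in>Basis. f b b' (x \<bullet> b')) \<partial>lborel))"
    by (rule nn_integral_sum) (auto simp: f_def)
  also have "\<dots> = (\<Sum>b\<in>(Basis::'a set). ennreal (s\<^sup>2))"
  proof (rule sum.cong)
    fix b :: 'a assume b: "b \<in> Basis"
    have "(\<integral>\<^sup>+x. ennreal (\<Prod>b'\<in>Basis. f b b' (x \<bullet> b')) \<partial>lborel)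
       = (\<Prod>b'\<in>(Basis::'a set). (\<integral>\<^sup>+t. ennreal (f b b' t) \<partial>lborel))"
      using nn_integral_lborel_prod[where 'a='a, of "f b"]
      by (simp add: prod_ennreal f_def)
    also have "\<dots> = (\<Prod>b'\<in>(Basis::'a set). (if b' = b then ennreal (s\<^sup>2) else 1))"
      by (intro prod.cong) (auto simp: f_def nd_nn1[OF s] nd_nn2[OF s])
    also have "\<dots> = ennreal (s\<^sup>2)" using b by (simp add: prod.delta')
    finally show "(\<integral>\<^sup>+x. ennreal (\<Prod>b'\<in>Basis. f b b' (x \<bullet> b')) \<partial>lborel) = ennreal (s\<^sup>2)" .
  qed simp
  also have "\<dots> = ennreal (real DIM('a) * s\<^sup>2)"
    by (simp add: ennreal_of_nat_eq_real_of_nat ennreal_mult)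
  finally show ?thesis .
qed


lemma lborel_reflect:
  assumes [measurable]: "h \<in> borel_measurable borel"
  shows "(\<integral>\<^sup>+x. h x \<partial>(lborel::'a::euclidean_space measure)) = (\<integral>\<^sup>+x. h (- x) \<partial>lborel)"
  by (subst lborel_affine[of "-1" 0]) (simp_all add: nn_integral_density nn_integral_distr)

lemma gauss_sym:
  assumes s: "s > 0" and g[measurable]: "g \<in> borel_measurable borel"
  shows "(\<integral>\<^sup>+x. g (- x) \<partial>(gauss s :: 'a::euclidean_space measure)) = (\<integral>\<^sup>+x. g x \<partial>gauss s)"
proof -
  define \<phi> where "\<phi> x = (2 * pi * s\<^sup>2) powr (- real DIM('a) / 2) * exp (- (norm x)\<^sup>2 / (2 * s\<^sup>2))" for x :: 'a
  have [measurable]: "\<phi> \<in> borel_measurable borel" unfolding \<phi>_def by measurable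
  have e: "\<And>x. \<phi> (- x) = \<phi> x" by (simp add: \<phi>_def)
  have "(\<integral>\<^sup>+x. g x \<partial>gauss s) = (\<integral>\<^sup>+x. ennreal (\<phi> x) * g x \<partial>(lborel::'a measure))"
    unfolding gauss_def \<phi>_def by (subst nn_integral_density) auto
  also have "\<dots> = (\<integral>\<^sup>+x. ennreal (\<phi> (-x)) * g (-x) \<partial>(lborel::'a measure))"
    by (rule lborel_reflect) measurable
  also have "\<dots> = (\<integral>\<^sup>+x. g (- x) \<partial>gauss s)"
    unfolding e unfolding gauss_def \<phi>_def by (subst nn_integral_density) auto
  finally show ?thesis ..
qed

lemma gauss_quad:
  assumes s: "s > 0" and a: "a \<ge> 0" and b: "b \<ge> 0"
  shows "(\<integral>\<^sup>+x. ennreal (a + b * (norm x)\<^sup>2) \<partial>(gauss s :: 'a::euclidean_space measure))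
       = ennreal (a + b * (real DIM('a) * s\<^sup>2))"
proof -
  interpret P: prob_space "gauss s :: 'a measure" by (rule gauss_prob[OF s])
  have pt: "ennreal (a + b * r) = ennreal a + ennreal b * ennreal r" if r: "r \<ge> 0" for r
  proof -
    have "ennreal (a + b * r) = ennreal a + ennreal (b * r)"
      by (rule ennreal_plus) (use a b r in auto)
    also have "ennreal (b * r) = ennreal b * ennreal r"
      by (rule ennreal_mult) (use b r in auto)
    finally show ?thesis .
  qed
  have "(\<integral>\<^sup>+x. ennreal (a + b * (norm x)\<^sup>2) \<partial>(gauss s :: 'a measure))
      = (\<integral>\<^sup>+x. ennreal a + ennreal b * ennreal ((norm x)\<^sup>2) \<partial>(gauss s :: 'a measure))"
    by (intro nn_integral_cong pt) simp
  also have "\<dots> = (\<integral>\<^sup>+x. ennreal a \<partial>(gauss s :: 'a measure)) + (\<integral>\<^sup>+x. ennreal b * ennreal ((norm x)\<^sup>2) \<partial>(gauss s :: 'a measure))"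
    by (rule nn_integral_add) auto
  also have "(\<integral>\<^sup>+x. ennreal a \<partial>(gauss s :: 'a measure)) = ennreal a"
    using P.emeasure_space_1 by simp
  also have "(\<integral>\<^sup>+x. ennreal b * ennreal ((norm x)\<^sup>2) \<partial>(gauss s :: 'a measure)) = ennreal b * ennreal (real DIM('a) * s\<^sup>2)"
    by (subst nn_integral_cmult) (auto simp: gauss_mom2[OF s])
  also have "ennreal a + ennreal b * ennreal (real DIM('a) * s\<^sup>2) = ennreal (a + b * (real DIM('a) * s\<^sup>2))"
    by (rule pt[symmetric]) simp
  finally show ?thesis .
qed

lemma smooth_deriv: "smooth_with \<beta> F \<Longrightarrow> (F has_derivative (\<lambda>h. grad F x \<bullet> h)) (at x)"
  unfolding smooth_with_def grad_def by (metis (mono_tags, lifting) someI_ex)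

lemma smooth_lip: "smooth_with \<beta> F \<Longrightarrow> norm (grad F x - grad F y) \<le> \<beta> * norm (x - y)"
  unfolding smooth_with_def by blast

lemma smooth_nonneg: assumes "smooth_with \<beta> (F :: 'a::euclidean_space \<Rightarrow> real)" shows "\<beta> \<ge> 0"
proof -
  obtain b :: 'a where b: "b \<in> Basis" using nonempty_Basis by blast
  have "0 \<le> norm (grad F b - grad F 0)" by simp
  also have "\<dots> \<le> \<beta> * norm (b - 0)" by (rule smooth_lip[OF assms])
  finally show ?thesis using b by simp
qed

lemma smooth_cont: "smooth_with \<beta> F \<Longrightarrow> continuous_on UNIV F"
  by (meson has_derivative_continuous continuous_at_imp_continuous_on smooth_deriv)

lemma descent:
  fixes F :: "'a::euclidean_space \<Rightarrow> real"
  assumes sm: "smooth_with \<beta> F"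
  shows "F y \<le> F x + grad F x \<bullet> (y - x) + \<beta> / 2 * (norm (y - x))\<^sup>2"
proof -
  define d where "d = y - x"
  define \<psi> where "\<psi> t = F (x + t *\<^sub>R d) - t * (grad F x \<bullet> d) - \<beta> / 2 * t\<^sup>2 * (norm d)\<^sup>2" for t :: real
  have D: "DERIV \<psi> t :> (grad F (x + t *\<^sub>R d) \<bullet> d - grad F x \<bullet> d - \<beta> * t * (norm d)\<^sup>2)" for t
  proof -
    have i: "((\<lambda>t. x + t *\<^sub>R d) has_derivative (\<lambda>h. h *\<^sub>R d)) (at t)"
      by (auto intro!: derivative_eq_intros)
    have "((\<lambda>t. F (x + t *\<^sub>R d)) has_derivative (\<lambda>h. grad F (x + t *\<^sub>R d) \<bullet> (h *\<^sub>R d))) (at t)"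
      by (rule has_derivative_compose[OF i smooth_deriv[OF sm]])
    moreover have "(\<lambda>h. grad F (x + t *\<^sub>R d) \<bullet> (h *\<^sub>R d)) = (*) (grad F (x + t *\<^sub>R d) \<bullet> d)"
      by (auto simp: fun_eq_iff)
    ultimately have "((\<lambda>t. F (x + t *\<^sub>R d)) has_field_derivative (grad F (x + t *\<^sub>R d) \<bullet> d)) (at t)"
      unfolding has_field_derivative_def by simp
    then have d1: "((\<lambda>t. F (x + t *\<^sub>R d)) has_real_derivative (grad F (x + t *\<^sub>R d) \<bullet> d)) (at t)" .
    have d2: "((\<lambda>t. t * (grad F x \<bullet> d)) has_real_derivative (grad F x \<bullet> d)) (at t)"
      using DERIV_cmult_right[OF DERIV_ident, of "grad F x \<bullet> d"] by simp
    have p: "((\<lambda>t. t\<^sup>2) has_real_derivative (2 * t)) (at t)"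
      using DERIV_pow[of 2 t] by simp
    have d3: "((\<lambda>t. \<beta> / 2 * t\<^sup>2 * (norm d)\<^sup>2) has_real_derivative (\<beta> * t * (norm d)\<^sup>2)) (at t)"
      using DERIV_cmult_right[OF DERIV_cmult[OF p, of "\<beta> / 2"], of "(norm d)\<^sup>2"] by simp
    show ?thesis unfolding \<psi>_def by (rule DERIV_diff[OF DERIV_diff[OF d1 d2] d3])
  qed
  have "\<psi> 1 \<le> \<psi> 0"
  proof (rule DERIV_nonpos_imp_nonincreasing[of 0 1])
    fix t :: real assume t: "0 \<le> t" "t \<le> 1"
    have "grad F (x + t *\<^sub>R d) \<bullet> d - grad F x \<bullet> d = (grad F (x + t *\<^sub>R d) - grad F x) \<bullet> d"
      by (simp add: inner_diff_left)
    also have "\<dots> \<le> norm (grad F (x + t *\<^sub>R d) - grad F x) * norm d"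
      by (rule norm_cauchy_schwarz)
    also have "\<dots> \<le> (\<beta> * norm (t *\<^sub>R d)) * norm d"
      using smooth_lip[OF sm, of "x + t *\<^sub>R d" x] by (intro mult_right_mono) auto
    also have "\<dots> = \<beta> * t * (norm d)\<^sup>2" using t by (simp add: power2_eq_square)
    finally show "\<exists>y. DERIV \<psi> t :> y \<and> y \<le> 0" using D[of t] by (intro exI[of _ "grad F (x + t *\<^sub>R d) \<bullet> d - grad F x \<bullet> d - \<beta> * t * (norm d)\<^sup>2"]) auto
  qed simp
  moreover have "\<psi> 1 = F y - grad F x \<bullet> d - \<beta> / 2 * (norm d)\<^sup>2"
    unfolding \<psi>_def by (simp add: d_def)
  moreover have "\<psi> 0 = F x" unfolding \<psi>_def by simp
  ultimately have "F y \<le> F x + grad F x \<bullet> d + \<beta> / 2 * (norm d)\<^sup>2" by linarith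
  then show ?thesis by (simp only: d_def)
qed


lemma smooth0_grad0:
  fixes F :: "'a::euclidean_space \<Rightarrow> real"
  assumes sm: "smooth_with 0 F" and nn: "\<And>z. F z \<ge> 0"
  shows "grad F 0 = 0"
proof -
  have key: "0 \<le> F 0 - t * (grad F 0 \<bullet> grad F 0)" for t
  proof -
    have "F (- t *\<^sub>R grad F 0) \<le> F 0 + grad F 0 \<bullet> (- t *\<^sub>R grad F 0 - 0) + 0 / 2 * (norm (- t *\<^sub>R grad F 0 - 0))\<^sup>2"
      by (rule descent[OF sm])
    then show ?thesis using nn[of "- t *\<^sub>R grad F 0"] by simp
  qed
  show ?thesis
  proof (rule ccontr)
    assume ne: "grad F 0 \<noteq> 0"
    then have gp: "grad F 0 \<bullet> grad F 0 > 0" by simp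
    have "0 \<le> F 0 - ((F 0 + 1) / (grad F 0 \<bullet> grad F 0)) * (grad F 0 \<bullet> grad F 0)" by (rule key)
    then show False using gp by simp
  qed
qed

lemma amgm:
  fixes g a c :: real
  assumes "c \<ge> 0" "c = 0 \<longrightarrow> g = 0"
  shows "g * a \<le> g\<^sup>2 / (4 * c) + c * a\<^sup>2"
proof (cases "c = 0")
  case True then show ?thesis using assms by simp
next
  case False
  then have c: "c > 0" using assms by simp
  have "0 \<le> (g - 2 * c * a)\<^sup>2" by simp
  then have "4 * c * (g * a) \<le> g\<^sup>2 + 4 * c * (c * a\<^sup>2)"
    by (simp add: power2_eq_square algebra_simps)
  then have "4 * c * (g * a) \<le> 4 * c * (g\<^sup>2 / (4 * c) + c * a\<^sup>2)"
    using c by (simp add: distrib_left)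
  then show ?thesis using c by (simp add: mult_le_cancel_left_pos)
qed


lemma sq3: fixes P q :: real shows "(P + q)\<^sup>2 \<le> 3 * P\<^sup>2 + 3/2 * q\<^sup>2"
proof -
  have "0 \<le> (2 * P - q)\<^sup>2" by simp
  then show ?thesis by (simp add: power2_eq_square algebra_simps)
qed

lemma sq2: fixes P q :: real shows "(P + q)\<^sup>2 \<le> 2 * P\<^sup>2 + 2 * q\<^sup>2"
proof -
  have "0 \<le> (P - q)\<^sup>2" by simp
  then show ?thesis by (simp add: power2_eq_square algebra_simps)
qed

lemma sq43: fixes M q :: real shows "(M + q)\<^sup>2 \<le> 4 * M\<^sup>2 + 4/3 * q\<^sup>2"
proof -
  have "0 \<le> (3 * M - q)\<^sup>2" by simp
  then show ?thesis by (simp add: power2_eq_square algebra_simps)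
qed

lemma arithV:
  fixes V0 g P L r LVbar Vy ny :: real
  assumes h: "Vy \<le> V0 + g * ny + LVbar / 2 * ny\<^sup>2" and ny: "0 \<le> ny" "ny \<le> P + L * r"
    and P: "P \<ge> 0" and L: "L \<ge> 0" and r: "r \<ge> 0" and g: "g \<ge> 0" and LV: "LVbar \<ge> 0" "LVbar = 0 \<longrightarrow> g = 0"
  shows "Vy \<le> V0 + g * P + g\<^sup>2 / LVbar + 3/2 * LVbar * P\<^sup>2 + LVbar * L\<^sup>2 * r\<^sup>2"
proof -
  have 1: "g * ny \<le> g * (P + L * r)" by (rule mult_left_mono[OF ny(2) g])
  have "ny\<^sup>2 \<le> (P + L * r)\<^sup>2" using ny by (intro power_mono) auto
  also have "\<dots> \<le> 3 * P\<^sup>2 + 3/2 * (L * r)\<^sup>2" by (rule sq3)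
  finally have 2: "LVbar / 2 * ny\<^sup>2 \<le> LVbar / 2 * (3 * P\<^sup>2 + 3/2 * (L * r)\<^sup>2)"
    using LV by (intro mult_left_mono) auto
  have 3: "g * (L * r) \<le> g\<^sup>2 / (4 * (LVbar / 4)) + LVbar / 4 * (L * r)\<^sup>2"
    by (rule amgm) (use LV in auto)
  have e: "g\<^sup>2 / (4 * (LVbar / 4)) = g\<^sup>2 / LVbar" by simp
  have e2: "LVbar / 2 * (3 * P\<^sup>2 + 3/2 * (L * r)\<^sup>2) = 3/2 * LVbar * P\<^sup>2 + 3/4 * (LVbar * L\<^sup>2 * r\<^sup>2)"
    by (simp add: power_mult_distrib algebra_simps)
  have e3: "LVbar / 4 * (L * r)\<^sup>2 = 1/4 * (LVbar * L\<^sup>2 * r\<^sup>2)"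
    by (simp add: power_mult_distrib algebra_simps)
  have e4: "g * (P + L * r) = g * P + g * (L * r)" by (simp add: algebra_simps)
  show ?thesis using h 1 2 3 e e2 e3 e4 by linarith
qed

lemma arithL:
  fixes lz l0 h nz X nu w r Llbar :: real
  assumes hz: "lz \<le> l0 + h * nz + Llbar / 2 * (X\<^sup>2 + nu\<^sup>2)" and nz: "nz \<le> X + nu" 
    and nu: "0 \<le> nu" "nu \<le> w + r" and X: "X \<ge> 0" and w: "w \<ge> 0" and r: "r \<ge> 0"
    and h: "h \<ge> 0" and Ll: "Llbar \<ge> 0" "Llbar = 0 \<longrightarrow> h = 0"
  shows "lz \<le> l0 + h * (X + w) + h\<^sup>2 / Llbar + Llbar / 2 * X\<^sup>2 + 3/2 * Llbar * w\<^sup>2 + Llbar * r\<^sup>2"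
proof -
  have 1: "h * nz \<le> h * (X + w) + h * r"
    using mult_left_mono[OF order_trans[OF nz add_left_mono[OF nu(2)]] h] by (simp add: algebra_simps)
  have "nu\<^sup>2 \<le> (w + r)\<^sup>2" using nu by (intro power_mono) auto
  also have "\<dots> \<le> 3 * w\<^sup>2 + 3/2 * r\<^sup>2" by (rule sq3)
  finally have 2: "Llbar / 2 * nu\<^sup>2 \<le> Llbar / 2 * (3 * w\<^sup>2 + 3/2 * r\<^sup>2)"
    using Ll by (intro mult_left_mono) auto
  have 3: "h * r \<le> h\<^sup>2 / (4 * (Llbar / 4)) + Llbar / 4 * r\<^sup>2"
    by (rule amgm) (use Ll in auto)
  have e: "h\<^sup>2 / (4 * (Llbar / 4)) = h\<^sup>2 / Llbar" by simp
  have e2: "Llbar / 2 * (3 * w\<^sup>2 + 3/2 * r\<^sup>2) = 3/2 * Llbar * w\<^sup>2 + 3/4 * (Llbar * r\<^sup>2)"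
    by (simp add: algebra_simps)
  have e5: "Llbar / 2 * (X\<^sup>2 + nu\<^sup>2) = Llbar / 2 * X\<^sup>2 + Llbar / 2 * nu\<^sup>2"
    by (simp add: algebra_simps)
  show ?thesis using hz 1 2 3 e e2 e5 by linarith
qed

lemma arithFinal:
  fixes V0 g K X L Lmu LVbar l0 h M Llbar Vx cV LVlow :: real
  assumes nn: "g \<ge> 0" "h \<ge> 0" "X \<ge> 0" "L \<ge> 0" "Lmu \<ge> 0" "M \<ge> 0"
    and LV: "LVbar \<ge> 0" "LVbar = 0 \<longrightarrow> g = 0" and Ll: "Llbar \<ge> 0" "Llbar = 0 \<longrightarrow> h = 0"
    and low: "LVlow > 0" "- cV + LVlow * X\<^sup>2 / 2 \<le> Vx"
  shows "(V0 + g * (K + L * (1 + Lmu) * X) + g\<^sup>2 / LVbar + 3/2 * LVbar * (K + L * (1 + Lmu) * X)\<^sup>2)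
       + (l0 + h * (X + (M + Lmu * X)) + h\<^sup>2 / Llbar + Llbar / 2 * X\<^sup>2 + 3/2 * Llbar * (M + Lmu * X)\<^sup>2)
       \<le> ((8 * L\<^sup>2 * LVbar * (1 + Lmu)\<^sup>2 + 2 * Llbar * (1 + 2 * Lmu\<^sup>2)) / LVlow) * Vx
         + (V0 + g * K + 3 * g\<^sup>2 / (2 * LVbar) + 3 * LVbar * K\<^sup>2 + l0 + h * M + h\<^sup>2 / Llbar
            + h\<^sup>2 * (1 + Lmu)\<^sup>2 / (2 * Llbar) + 6 * Llbar * M\<^sup>2
            + ((8 * L\<^sup>2 * LVbar * (1 + Lmu)\<^sup>2 + 2 * Llbar * (1 + 2 * Lmu\<^sup>2)) / LVlow) * cV)"
proof -
  define Q where "Q = L * (1 + Lmu) * X"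
  define c2 where "c2 = (8 * L\<^sup>2 * LVbar * (1 + Lmu)\<^sup>2 + 2 * Llbar * (1 + 2 * Lmu\<^sup>2)) / LVlow"
  have a1: "g * Q \<le> g\<^sup>2 / (4 * (LVbar / 2)) + LVbar / 2 * Q\<^sup>2"
    by (rule amgm) (use LV in auto)
  have a1e: "g\<^sup>2 / (4 * (LVbar / 2)) = g\<^sup>2 / (2 * LVbar)" by simp
  have a2: "3/2 * LVbar * (K + Q)\<^sup>2 \<le> 3/2 * LVbar * (2 * K\<^sup>2 + 2 * Q\<^sup>2)"
    using LV by (intro mult_left_mono sq2) auto
  have a3: "(h * (1 + Lmu)) * X \<le> (h * (1 + Lmu))\<^sup>2 / (4 * (Llbar / 2)) + Llbar / 2 * X\<^sup>2"
    by (rule amgm) (use Ll in auto)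
  have a3e: "(h * (1 + Lmu))\<^sup>2 / (4 * (Llbar / 2)) = h\<^sup>2 * (1 + Lmu)\<^sup>2 / (2 * Llbar)"
    by (simp add: power_mult_distrib)
  have a4: "3/2 * Llbar * (M + Lmu * X)\<^sup>2 \<le> 3/2 * Llbar * (4 * M\<^sup>2 + 4/3 * (Lmu * X)\<^sup>2)"
    using Ll by (intro mult_left_mono sq43) auto
  have hX: "h * (X + (M + Lmu * X)) = (h * (1 + Lmu)) * X + h * M" by (simp add: algebra_simps)
  have gK: "g * (K + Q) = g * K + g * Q" by (simp add: algebra_simps)
  have e1: "3/2 * LVbar * (2 * K\<^sup>2 + 2 * Q\<^sup>2) = 3 * LVbar * K\<^sup>2 + 3 * (LVbar * Q\<^sup>2)" by (simp add: algebra_simps)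
  have e2: "3/2 * Llbar * (4 * M\<^sup>2 + 4/3 * (Lmu * X)\<^sup>2) = 6 * Llbar * M\<^sup>2 + 2 * (Llbar * Lmu\<^sup>2 * X\<^sup>2)"
    by (simp add: algebra_simps power_mult_distrib)
  have e3: "3 * g\<^sup>2 / (2 * LVbar) = g\<^sup>2 / (2 * LVbar) + g\<^sup>2 / LVbar" by (simp add: field_simps)
  have T: "7/2 * (LVbar * Q\<^sup>2) + Llbar / 2 * X\<^sup>2 + Llbar / 2 * X\<^sup>2 + 2 * (Llbar * Lmu\<^sup>2 * X\<^sup>2)
      \<le> c2 * LVlow / 2 * X\<^sup>2"
  proof -
    have "7/2 * (LVbar * Q\<^sup>2) \<le> 4 * (LVbar * Q\<^sup>2)" using LV by simp
    moreover have "c2 * LVlow / 2 * X\<^sup>2 = 4 * (LVbar * Q\<^sup>2) + Llbar * X\<^sup>2 + 2 * (Llbar * Lmu\<^sup>2 * X\<^sup>2)"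
      unfolding c2_def Q_def using low(1) by (simp add: field_simps power_mult_distrib power2_eq_square)
    ultimately show ?thesis by linarith
  qed
  have c2nn: "c2 \<ge> 0" unfolding c2_def using LV Ll low by (intro divide_nonneg_pos) auto
  have V: "c2 * LVlow / 2 * X\<^sup>2 \<le> c2 * Vx + c2 * cV"
  proof -
    have "c2 * (LVlow * X\<^sup>2 / 2) \<le> c2 * (Vx + cV)" using low(2) c2nn by (intro mult_left_mono) auto
    then show ?thesis by (simp add: algebra_simps)
  qed
  show ?thesis unfolding c2_def[symmetric] Q_def[symmetric]
    using a1 a1e a2 a3 a3e a4 hX gK e1 e2 e3 T V by linarith
qed


lemma inner_bound:
  fixes V :: "'x::euclidean_space \<Rightarrow> real"
  assumes s: "s > 0" and sm: "smooth_with \<beta> V" and nn: "\<And>z. V z \<ge> 0"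
  shows "(\<integral>\<^sup>+n. ennreal (V (y + n)) \<partial>(gauss s :: 'x measure)) \<le> ennreal (V y + \<beta> / 2 * (real DIM('x) * s\<^sup>2))"
proof -
  have [measurable]: "V \<in> borel_measurable borel"
    by (rule borel_measurable_continuous_onI[OF smooth_cont[OF sm]])
  have b: "\<beta> \<ge> 0" by (rule smooth_nonneg[OF sm])
  define I where "I = (\<integral>\<^sup>+n. ennreal (V (y + n)) \<partial>(gauss s :: 'x measure))"
  have sym: "(\<integral>\<^sup>+n. ennreal (V (y - n)) \<partial>(gauss s :: 'x measure)) = I"
    unfolding I_def using gauss_sym[OF s, of "\<lambda>n. ennreal (V (y + n))"] by simp
  have pt: "ennreal (V (y + n)) + ennreal (V (y - n)) \<le> ennreal (2 * V y + \<beta> * (norm n)\<^sup>2)" for n :: 'x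
  proof -
    have d1: "V (y + n) \<le> V y + grad V y \<bullet> n + \<beta> / 2 * (norm n)\<^sup>2"
      using descent[OF sm, of "y + n" y] by simp
    have d2: "V (y - n) \<le> V y - grad V y \<bullet> n + \<beta> / 2 * (norm n)\<^sup>2"
      using descent[OF sm, of "y - n" y] by simp
    have "ennreal (V (y + n)) + ennreal (V (y - n)) = ennreal (V (y + n) + V (y - n))"
      by (rule ennreal_plus[symmetric]) (use nn in auto)
    also have "\<dots> \<le> ennreal (2 * V y + \<beta> * (norm n)\<^sup>2)"
      using d1 d2 by (intro ennreal_leI) simp
    finally show ?thesis .
  qed
  have "I + I = (\<integral>\<^sup>+n. ennreal (V (y + n)) \<partial>(gauss s :: 'x measure)) + (\<integral>\<^sup>+n. ennreal (V (y - n)) \<partial>(gauss s :: 'x measure))"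
    using sym unfolding I_def by simp
  also have "\<dots> = (\<integral>\<^sup>+n. ennreal (V (y + n)) + ennreal (V (y - n)) \<partial>(gauss s :: 'x measure))"
    by (rule nn_integral_add[symmetric]) auto
  also have "\<dots> \<le> (\<integral>\<^sup>+n. ennreal (2 * V y + \<beta> * (norm n)\<^sup>2) \<partial>(gauss s :: 'x measure))"
    by (intro nn_integral_mono pt)
  also have "\<dots> = ennreal (2 * V y + \<beta> * (real DIM('x) * s\<^sup>2))"
    by (rule gauss_quad[OF s]) (use nn b in auto)
  finally have II: "I + I \<le> ennreal (2 * V y + \<beta> * (real DIM('x) * s\<^sup>2))" .
  show ?thesis
  proof (cases I rule: ennreal_cases)
    case (real r)
    then have "ennreal (r + r) \<le> ennreal (2 * V y + \<beta> * (real DIM('x) * s\<^sup>2))"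
      using II by (simp add: ennreal_plus[symmetric])
    then have "r + r \<le> 2 * V y + \<beta> * (real DIM('x) * s\<^sup>2)"
      using nn[of y] b by (subst (asm) ennreal_le_iff) auto
    then have "r \<le> V y + \<beta> / 2 * (real DIM('x) * s\<^sup>2)" by simp
    then show ?thesis using real unfolding I_def by (simp add: ennreal_leI)
  next
    case top
    then show ?thesis using II by (simp add: top_unique)
  qed
qed

definition Cexpr :: "real \<Rightarrow> real \<Rightarrow> real \<Rightarrow> real \<Rightarrow> real \<Rightarrow> real \<Rightarrow> real \<Rightarrow> real \<Rightarrow> real \<Rightarrow> real \<Rightarrow> real \<Rightarrow> real \<Rightarrow> real" where
  "Cexpr L Lmu LVbar Llbar LVlow cV a b c d e g =
     b + c * (g + 2 * L * a) + 3 * c\<^sup>2 / (2 * LVbar) + 3 * LVbar * (g + 2 * L * a)\<^sup>2 + d + e * a + e\<^sup>2 / Llbar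
            + e\<^sup>2 * (1 + Lmu)\<^sup>2 / (2 * Llbar) + 6 * Llbar * a\<^sup>2
            + ((8 * L\<^sup>2 * LVbar * (1 + Lmu)\<^sup>2 + 2 * Llbar * (1 + 2 * Lmu\<^sup>2)) / LVlow) * cV"

lemma main_bound:
  fixes f :: "'x::euclidean_space \<times> 'u::euclidean_space \<Rightarrow> 'x" and mus :: "nat \<Rightarrow> 'x \<Rightarrow> 'u"
    and l :: "'x \<times> 'u \<Rightarrow> real" and V :: "'x \<Rightarrow> real"
  assumes istar: "istar \<in> {1..m}" and fL: "L-lipschitz_on UNIV f" and \<sigma>: "\<sigma> > 0"
    and lnn: "\<forall>z. l z \<ge> 0" and Vnn: "\<forall>x. V x \<ge> 0"
    and muL: "\<forall>i\<in>{1..m}. Lmu-lipschitz_on UNIV (mus i)"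
    and lsm: "smooth_with Llbar l" and Vsm: "smooth_with LVbar V"
    and LVlow: "LVlow > 0" and cV: "cV \<ge> 0" and low: "\<forall>x. V x \<ge> - cV + LVlow * (norm x)\<^sup>2 / 2"
    and \<sigma>u: "\<sigma>u > 0" and i: "i \<in> {1..m}"
  shows "integral\<^sup>L (gauss \<sigma>u \<Otimes>\<^sub>M gauss \<sigma>) (\<lambda>(nu, n). V (f (x, mus i x + nu) + n))
          \<le> ((8 * L\<^sup>2 * LVbar * (1 + Lmu)\<^sup>2 + 2 * Llbar * (1 + 2 * Lmu\<^sup>2)) / LVlow) * V x
             - integral\<^sup>L (gauss \<sigma>u) (\<lambda>nu. l (x, mus i x + nu))
             + Cexpr L Lmu LVbar Llbar LVlow cV (Max ((\<lambda>j. norm (mus j 0)) ` {1..m})) (V 0) (norm (grad V 0))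
                 (l (0, 0)) (norm (grad l (0, 0))) (norm (f (0, mus istar 0)))
             + (LVbar * L\<^sup>2 + Llbar) * real DIM('u) * \<sigma>u\<^sup>2
             + LVbar / 2 * real DIM('x) * \<sigma>\<^sup>2"
proof -
  define M where "M = Max ((\<lambda>j. norm (mus j 0)) ` {1..m})"
  have Mj: "norm (mus j 0) \<le> M" if "j \<in> {1..m}" for j
    unfolding M_def using that by (intro Max_ge) auto
  have M0: "0 \<le> M" using Mj[OF i] norm_ge_zero order_trans by blast
  have L0: "0 \<le> L" by (rule lipschitz_on_nonneg[OF fL])
  have muLi: "Lmu-lipschitz_on UNIV (mus i)" using muL i by blast
  have Lmu0: "0 \<le> Lmu" by (rule lipschitz_on_nonneg[OF muLi])
  have LV0: "0 \<le> LVbar" by (rule smooth_nonneg[OF Vsm])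
  have Ll0: "0 \<le> Llbar" by (rule smooth_nonneg[OF lsm])
  define g where "g = norm (grad V 0)"
  define h where "h = norm (grad l (0, 0))"
  define X where "X = norm x"
  define F0 where "F0 = norm (f (0, mus istar 0))"
  define K where "K = F0 + 2 * L * M"
  have gV: "LVbar = 0 \<longrightarrow> g = 0"
  proof
    assume "LVbar = 0"
    then have "grad V 0 = 0" using Vsm Vnn by (intro smooth0_grad0) auto
    then show "g = 0" by (simp add: g_def)
  qed
  have gl: "Llbar = 0 \<longrightarrow> h = 0"
  proof
    assume "Llbar = 0"
    then have "grad l 0 = 0" using lsm lnn by (intro smooth0_grad0) auto
    then show "h = 0" by (simp add: h_def zero_prod_def)
  qed
  define AV where "AV = V 0 + g * (K + L * (1 + Lmu) * X) + g\<^sup>2 / LVbar + 3/2 * LVbar * (K + L * (1 + Lmu) * X)\<^sup>2"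
  define Al where "Al = l (0, 0) + h * (X + (M + Lmu * X)) + h\<^sup>2 / Llbar + Llbar / 2 * X\<^sup>2 + 3/2 * Llbar * (M + Lmu * X)\<^sup>2"
  have mux: "norm (mus i x) \<le> M + Lmu * X"
  proof -
    have "norm (mus i x) \<le> norm (mus i 0) + dist (mus i x) (mus i 0)"
      by (metis dist_norm norm_triangle_sub)
    also have "dist (mus i x) (mus i 0) \<le> Lmu * dist x 0" by (rule lipschitz_onD[OF muLi]) auto
    finally show ?thesis using Mj[OF i] by (simp add: X_def)
  qed
  have Vpt: "V (f (x, mus i x + nu)) \<le> AV + LVbar * L\<^sup>2 * (norm nu)\<^sup>2" for nu
  proof -
    define y where "y = f (x, mus i x + nu)"
    have ny: "norm y \<le> K + L * (1 + Lmu) * X + L * norm nu"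
    proof -
      have "norm y \<le> norm (f (0, mus istar 0)) + dist y (f (0, mus istar 0))"
        by (metis dist_norm norm_triangle_sub)
      also have "dist y (f (0, mus istar 0)) \<le> L * dist (x, mus i x + nu) (0, mus istar 0)"
        unfolding y_def by (rule lipschitz_onD[OF fL]) auto
      also have "dist (x, mus i x + nu) (0, mus istar 0) \<le> X + norm (mus i x + nu - mus istar 0)"
        using norm_Pair_le[of x "mus i x + nu - mus istar 0"] by (simp add: dist_norm X_def)
      also have "norm (mus i x + nu - mus istar 0) \<le> norm (mus i x) + norm nu + norm (mus istar 0)"
        by (metis add_diff_eq norm_triangle_ineq norm_triangle_ineq4 order_trans add_right_mono)
      finally have "norm y \<le> F0 + L * (X + (norm (mus i x) + norm nu + norm (mus istar 0)))"
        unfolding F0_def using L0 by (simp add: mult_left_mono)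
      moreover have "L * (X + (norm (mus i x) + norm nu + norm (mus istar 0))) \<le> L * (X + ((M + Lmu * X) + norm nu + M))"
        using mux Mj[OF istar] L0 by (intro mult_left_mono) auto
      moreover have "F0 + L * (X + ((M + Lmu * X) + norm nu + M)) = K + L * (1 + Lmu) * X + L * norm nu"
        unfolding K_def by (simp add: algebra_simps)
      ultimately show ?thesis by linarith
    qed
    have d: "V y \<le> V 0 + grad V 0 \<bullet> (y - 0) + LVbar / 2 * (norm (y - 0))\<^sup>2"
      by (rule descent[OF Vsm])
    have cs: "grad V 0 \<bullet> y \<le> g * norm y" unfolding g_def by (rule norm_cauchy_schwarz)
    have "V y \<le> V 0 + g * norm y + LVbar / 2 * (norm y)\<^sup>2" using d cs by simp
    then have "V y \<le> V 0 + g * (K + L * (1 + Lmu) * X) + g\<^sup>2 / LVbar + 3/2 * LVbar * (K + L * (1 + Lmu) * X)\<^sup>2 + LVbar * L\<^sup>2 * (norm nu)\<^sup>2"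
      by (rule arithV[OF _ _ ny]) (use L0 LV0 gV M0 Lmu0 in \<open>auto simp: g_def K_def F0_def X_def\<close>)
    then show ?thesis unfolding AV_def y_def .
  qed
  have lpt: "l (x, mus i x + nu) \<le> Al + Llbar * (norm nu)\<^sup>2" for nu
  proof -
    define u where "u = mus i x + nu"
    have d: "l (x, u) \<le> l 0 + grad l 0 \<bullet> ((x, u) - 0) + Llbar / 2 * (norm ((x, u) - 0))\<^sup>2"
      by (rule descent[OF lsm])
    have cs: "grad l 0 \<bullet> (x, u) \<le> h * norm (x, u)" unfolding h_def zero_prod_def[symmetric] by (rule norm_cauchy_schwarz)
    have n2: "(norm (x, u))\<^sup>2 = X\<^sup>2 + (norm u)\<^sup>2" by (simp add: norm_Pair X_def)
    have "l (x, u) \<le> l (0, 0) + h * norm (x, u) + Llbar / 2 * (X\<^sup>2 + (norm u)\<^sup>2)"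
      using d cs n2 by (simp add: zero_prod_def)
    moreover have "norm (x, u) \<le> X + norm u" using norm_Pair_le by (simp add: X_def)
    moreover have "norm u \<le> (M + Lmu * X) + norm nu"
      unfolding u_def using mux norm_triangle_ineq[of "mus i x" nu] by linarith
    ultimately have "l (x, u) \<le> l (0, 0) + h * (X + (M + Lmu * X)) + h\<^sup>2 / Llbar + Llbar / 2 * X\<^sup>2 + 3/2 * Llbar * (M + Lmu * X)\<^sup>2 + Llbar * (norm nu)\<^sup>2"
      by (intro arithL) (use M0 Lmu0 Ll0 gl in \<open>auto simp: h_def X_def\<close>)
    then show ?thesis unfolding Al_def u_def .
  qed
  have contV: "continuous_on UNIV V" by (rule smooth_cont[OF Vsm])
  have contl: "continuous_on UNIV l" by (rule smooth_cont[OF lsm])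
  have contf: "continuous_on UNIV f" by (rule lipschitz_on_continuous_on[OF fL])
  have [measurable]: "V \<in> borel_measurable borel" by (rule borel_measurable_continuous_onI[OF contV])
  have sets_prod: "sets (gauss \<sigma>u \<Otimes>\<^sub>M gauss \<sigma>) = sets (borel :: ('u \<times> 'x) measure)"
  proof -
    have "sets (gauss \<sigma>u \<Otimes>\<^sub>M gauss \<sigma>) = sets ((borel :: 'u measure) \<Otimes>\<^sub>M (borel :: 'x measure))"
      by (rule sets_pair_measure_cong) simp_all
    also have "(borel :: 'u measure) \<Otimes>\<^sub>M (borel :: 'x measure) = borel" by (rule borel_prod)
    finally show ?thesis .
  qed
  have eqf: "(\<lambda>(nu, n). V (f (x, mus i x + nu) + n)) = (\<lambda>p. V (f (x, mus i x + fst p) + snd p))"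
    by (auto simp: fun_eq_iff)
  have cont1: "continuous_on UNIV (\<lambda>p::'u \<times> 'x. V (f (x, mus i x + fst p) + snd p))"
    by (intro continuous_on_compose2[OF contV] continuous_on_add continuous_on_compose2[OF contf] continuous_intros) auto
  have meas1: "(\<lambda>(nu, n). V (f (x, mus i x + nu) + n)) \<in> borel_measurable (gauss \<sigma>u \<Otimes>\<^sub>M gauss \<sigma>)"
    unfolding eqf measurable_cong_sets[OF sets_prod refl] by (rule borel_measurable_continuous_onI[OF cont1])
  have cont2: "continuous_on UNIV (\<lambda>nu. l (x, mus i x + nu))"
    by (intro continuous_on_compose2[OF contl] continuous_intros) auto
  have meas2: "(\<lambda>nu. l (x, mus i x + nu)) \<in> borel_measurable (gauss \<sigma>u)"
    using borel_measurable_continuous_onI[OF cont2] by (simp add: measurable_cong_sets[OF gauss_sets refl])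
  have cont3: "continuous_on UNIV (\<lambda>nu. V (f (x, mus i x + nu)))"
    by (intro continuous_on_compose2[OF contV] continuous_on_compose2[OF contf] continuous_intros) auto
  interpret Ps: prob_space "gauss \<sigma> :: 'x measure" by (rule gauss_prob[OF \<sigma>])
  have AV0: "AV \<ge> 0" unfolding AV_def K_def F0_def g_def X_def
    using Vnn L0 M0 Lmu0 LV0 by (intro add_nonneg_nonneg mult_nonneg_nonneg divide_nonneg_nonneg) auto
  have Al0: "Al \<ge> 0" unfolding Al_def h_def X_def
    using lnn L0 M0 Lmu0 Ll0 by (intro add_nonneg_nonneg mult_nonneg_nonneg divide_nonneg_nonneg) auto
  have I1: "integral\<^sup>L (gauss \<sigma>u \<Otimes>\<^sub>M gauss \<sigma>) (\<lambda>(nu, n). V (f (x, mus i x + nu) + n))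
      \<le> (AV + LVbar / 2 * (real DIM('x) * \<sigma>\<^sup>2)) + LVbar * L\<^sup>2 * (real DIM('u) * \<sigma>u\<^sup>2)"
  proof -
    have eq: "integral\<^sup>L (gauss \<sigma>u \<Otimes>\<^sub>M gauss \<sigma>) (\<lambda>(nu, n). V (f (x, mus i x + nu) + n))
        = enn2real (\<integral>\<^sup>+p. ennreal ((\<lambda>(nu, n). V (f (x, mus i x + nu) + n)) p) \<partial>(gauss \<sigma>u \<Otimes>\<^sub>M gauss \<sigma>))"
      by (rule integral_eq_nn_integral[OF meas1]) (auto simp: Vnn split: prod.splits)
    have "(\<integral>\<^sup>+p. ennreal ((\<lambda>(nu, n). V (f (x, mus i x + nu) + n)) p) \<partial>(gauss \<sigma>u \<Otimes>\<^sub>M gauss \<sigma>))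
        = (\<integral>\<^sup>+nu. \<integral>\<^sup>+n. ennreal (V (f (x, mus i x + nu) + n)) \<partial>gauss \<sigma> \<partial>gauss \<sigma>u)"
      using Ps.nn_integral_fst[of "\<lambda>p. ennreal ((\<lambda>(nu, n). V (f (x, mus i x + nu) + n)) p)" "gauss \<sigma>u"] meas1
      by simp
    also have "\<dots> \<le> (\<integral>\<^sup>+nu. ennreal (V (f (x, mus i x + nu)) + LVbar / 2 * (real DIM('x) * \<sigma>\<^sup>2)) \<partial>gauss \<sigma>u)"
      by (intro nn_integral_mono inner_bound[OF \<sigma> Vsm]) (use Vnn in auto)
    also have "\<dots> \<le> (\<integral>\<^sup>+nu. ennreal ((AV + LVbar / 2 * (real DIM('x) * \<sigma>\<^sup>2)) + LVbar * L\<^sup>2 * (norm nu)\<^sup>2) \<partial>(gauss \<sigma>u :: 'u measure))"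
    proof (rule nn_integral_mono)
      fix nu :: 'u
      show "ennreal (V (f (x, mus i x + nu)) + LVbar / 2 * (real DIM('x) * \<sigma>\<^sup>2))
          \<le> ennreal ((AV + LVbar / 2 * (real DIM('x) * \<sigma>\<^sup>2)) + LVbar * L\<^sup>2 * (norm nu)\<^sup>2)"
        using Vpt[of nu] by (intro ennreal_leI) simp
    qed
    also have "\<dots> = ennreal ((AV + LVbar / 2 * (real DIM('x) * \<sigma>\<^sup>2)) + LVbar * L\<^sup>2 * (real DIM('u) * \<sigma>u\<^sup>2))"
      by (rule gauss_quad[OF \<sigma>u]) (use AV0 LV0 \<sigma> in auto)
    finally have E: "(\<integral>\<^sup>+p. ennreal ((\<lambda>(nu, n). V (f (x, mus i x + nu) + n)) p) \<partial>(gauss \<sigma>u \<Otimes>\<^sub>M gauss \<sigma>))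
        \<le> ennreal ((AV + LVbar / 2 * (real DIM('x) * \<sigma>\<^sup>2)) + LVbar * L\<^sup>2 * (real DIM('u) * \<sigma>u\<^sup>2))" .
    show ?thesis unfolding eq
      by (rule enn2real_leI[OF _ E]) (use AV0 LV0 \<sigma> \<sigma>u in auto)
  qed
  have I2: "integral\<^sup>L (gauss \<sigma>u) (\<lambda>nu. l (x, mus i x + nu)) \<le> Al + Llbar * (real DIM('u) * \<sigma>u\<^sup>2)"
  proof -
    have eq: "integral\<^sup>L (gauss \<sigma>u) (\<lambda>nu. l (x, mus i x + nu))
        = enn2real (\<integral>\<^sup>+nu. ennreal (l (x, mus i x + nu)) \<partial>gauss \<sigma>u)"
      by (rule integral_eq_nn_integral[OF meas2]) (auto simp: lnn)
    have "(\<integral>\<^sup>+nu. ennreal (l (x, mus i x + nu)) \<partial>gauss \<sigma>u) \<le> (\<integral>\<^sup>+nu. ennreal (Al + Llbar * (norm nu)\<^sup>2) \<partial>(gauss \<sigma>u :: 'u measure))"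
    proof (rule nn_integral_mono)
      fix nu :: 'u
      show "ennreal (l (x, mus i x + nu)) \<le> ennreal (Al + Llbar * (norm nu)\<^sup>2)"
        using lpt[of nu] by (intro ennreal_leI) simp
    qed
    also have "\<dots> = ennreal (Al + Llbar * (real DIM('u) * \<sigma>u\<^sup>2))"
      by (rule gauss_quad[OF \<sigma>u]) (use Al0 Ll0 in auto)
    finally have E: "(\<integral>\<^sup>+nu. ennreal (l (x, mus i x + nu)) \<partial>gauss \<sigma>u) \<le> ennreal (Al + Llbar * (real DIM('u) * \<sigma>u\<^sup>2))" .
    show ?thesis unfolding eq
      by (rule enn2real_leI[OF _ E]) (use Al0 Ll0 \<sigma>u in auto)
  qed
  have fin: "AV + Al \<le> ((8 * L\<^sup>2 * LVbar * (1 + Lmu)\<^sup>2 + 2 * Llbar * (1 + 2 * Lmu\<^sup>2)) / LVlow) * V x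
      + Cexpr L Lmu LVbar Llbar LVlow cV M (V 0) g (l (0, 0)) h F0"
    unfolding AV_def Al_def Cexpr_def K_def
    by (rule arithFinal) (use L0 M0 Lmu0 LV0 Ll0 gV gl LVlow low in \<open>auto simp: g_def h_def X_def\<close>)
  show ?thesis
    using I1 I2 fin unfolding M_def[symmetric] g_def[symmetric] h_def[symmetric] F0_def[symmetric]
    by (simp add: algebra_simps)
qed

theorem lemma3:
  fixes L Lmu LVbar Llbar LVlow cV :: real
  shows "\<exists>C :: real \<Rightarrow> real \<Rightarrow> real \<Rightarrow> real \<Rightarrow> real \<Rightarrow> real \<Rightarrow> real.
    (\<forall>a b c d e g. C a b c d e g \<ge> 0) \<and>
    (\<forall>(f :: 'x::euclidean_space \<times> 'u::euclidean_space \<Rightarrow> 'x)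
       (fs :: nat \<Rightarrow> 'x \<times> 'u \<Rightarrow> 'x) (mus :: nat \<Rightarrow> 'x \<Rightarrow> 'u) (m :: nat) (istar :: nat)
       (l :: 'x \<times> 'u \<Rightarrow> real) (V :: 'x \<Rightarrow> real) (\<sigma> :: real) (\<sigma>u0 :: real) (Lu :: real) (\<gamma> :: real).
       ( istar \<in> {1..m} \<and> f = fs istar \<and> L-lipschitz_on UNIV f \<and> \<sigma> > 0
       \<and> (\<forall>z. l z \<ge> 0) \<and> (\<forall>x. V x \<ge> 0)
       \<and> cost_to_go f (mus istar) l V \<sigma> \<sigma>u0 Lu \<gamma>
       \<and> (\<forall>i\<in>{1..m}. Lmu-lipschitz_on UNIV (mus i))
       \<and> smooth_with Llbar l \<and> smooth_with LVbar V
       \<and> LVlow > 0 \<and> cV \<ge> 0 \<and> (\<forall>x. V x \<ge> - cV + LVlow * (norm x)\<^sup>2 / 2) )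
       \<longrightarrow>
       (\<forall>x. \<forall>\<sigma>u > 0. \<forall>i\<in>{1..m}.
          integral\<^sup>L (gauss \<sigma>u \<Otimes>\<^sub>M gauss \<sigma>) (\<lambda>(nu, n). V (f (x, mus i x + nu) + n))
          \<le> ((8 * L\<^sup>2 * LVbar * (1 + Lmu)\<^sup>2 + 2 * Llbar * (1 + 2 * Lmu\<^sup>2)) / LVlow) * V x
             - integral\<^sup>L (gauss \<sigma>u) (\<lambda>nu. l (x, mus i x + nu))
             + C (Max ((\<lambda>j. norm (mus j 0)) ` {1..m})) (V 0) (norm (grad V 0))
                 (l (0, 0)) (norm (grad l (0, 0))) (norm (f (0, mus istar 0)))
             + (LVbar * L\<^sup>2 + Llbar) * real DIM('u) * \<sigma>u\<^sup>2
             + LVbar / 2 * real DIM('x) * \<sigma>\<^sup>2))"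
proof -
  define C where "C = (\<lambda>a b c d e g. max 0 (Cexpr L Lmu LVbar Llbar LVlow cV a b c d e g))"
  show ?thesis
    apply (rule exI[of _ C])
    apply (intro conjI allI impI ballI)
     apply (simp add: C_def)
    subgoal for f fs mus m istar l V \<sigma> \<sigma>u0 Lu \<gamma> x \<sigma>u i
      apply (elim conjE)
      apply (rule order_trans[OF main_bound[where istar=istar and m=m and L=L and Lmu=Lmu and LVbar=LVbar
               and Llbar=Llbar and LVlow=LVlow and cV=cV and f=f and mus=mus and l=l and V=V
               and \<sigma>=\<sigma> and \<sigma>u=\<sigma>u and i=i and x=x]])
                   apply assumption+
      apply (simp add: C_def)
      done
    done
qed

end
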